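(* Let $(Q,\rightarrow)$ be a finite transition system. Let $\mathscr{U}$ be a preorder on $Q$ and $\mathscr{R}\subseteq\mathscr{U}$ a preorder with $\mathscr{R}\circ\rightarrow^{-1}\subseteq\rightarrow^{-1}\circ\mathscr{U}$. Let $\mathscr{P}$ be the coarsest equivalence relation with $\mathscr{P}\subseteq\mathscr{R}$ and $\mathscr{P}\circ\rightarrow^{-1}\subseteq\rightarrow^{-1}\circ\mathscr{R}$. Let $\mathit{NotRel}=\mathscr{U}\setminus\mathscr{R}$ and $\mathscr{V}=\mathscr{R}\setminus\mathit{NotRel}'$ where $$\mathit{NotRel}'=\bigcup\{[c]_{\mathscr{P}}\times[d]_{\mathscr{P}} \mid b,c,d\in Q,\ c\rightarrow b,\ c\,\mathscr{R}\,d,\ d\in\rightarrow^{-1}(\mathit{NotRel}(b)),\ d\notin\rightarrow^{-1}(\mathscr{R}(b))\}.$$ Then: 1. $\mathit{NotRel}'=X$ where $X=\{(c,d)\mid \exists b\in Q:\ c\rightarrow_{\mathscr{R}}b,\ c\,\mathscr{R}\,d,\ d\in\rightarrow_{\mathscr{R}}^{-1}(\mathit{NotRel}(b)),\ d\notin\rightarrow_{\mathscr{R}}^{-1}(\mathscr{R}(b))\}$; 2. every simulation $\mathscr{S}\subseteq\mathscr{R}$ satisfies $\mathscr{S}\subseteq\mathscr{V}$; 3. $\mathscr{V}\circ\rightarrow^{-1}\subseteq\rightarrow^{-1}\circ\mathscr{R}$; 4. $\mathscr{V}$ is a preorder; 5. $\mathscr{V}$ is $\mathscr{R}$-stable, i.e.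 $\mathscr{V}\subseteq\mathscr{R}$ is a preorder with $\mathscr{V}\circ\rightarrow^{-1}\subseteq\rightarrow^{-1}\circ\mathscr{R}$; 6. the blocks of $\mathscr{V}$ are exactly the blocks of $\mathscr{P}$ (i.e. $\{[q]_{\mathscr{V}}\mid q\in Q\}=\{[q]_{\mathscr{P}}\mid q\in Q\}$).
   Context: For relations on $Q$: $\mathscr{R}(q)=\{q'\mid q\,\mathscr{R}\,q'\}$, $\mathscr{R}(Y)=\bigcup_{q\in Y}\mathscr{R}(q)$, $\mathscr{R}^{-1}=\{(y,x)\mid(x,y)\in\mathscr{R}\}$, $\mathscr{S}\circ\mathscr{R}=\{(x,y)\mid y\in\mathscr{S}(\mathscr{R}(x))\}$. A preorder is a reflexive transitive relation; $[q]_{\mathscr{R}}=\{q'\mid q\,\mathscr{R}\,q'\wedge q'\,\mathscr{R}\,q\}$. A relation $\mathscr{S}$ is a simulation if $\mathscr{S}\circ\rightarrow^{-1}\subseteq\rightarrow^{-1}\circ\mathscr{S}$ (equivalently: $q_1\,\mathscr{S}\,q_2$ and $q_1\rightarrow q_1'$ imply some $q_2'$ with $q_2\rightarrow q_2'$ and $q_1'\,\mathscr{S}\,q_2'$). A transition $q\rightarrow q'$ is $\mathscr{R}$-maximal, written $q\rightarrow_{\mathscr{R}}q'$, if for all $q''$, ($q\rightarrow q''$ and $q'\,\mathscr{R}\,q''$) implies $q''\in[q']_{\mathscr{R}}$. The coarsest equivalence relation $\mathscr{P}$ in the hypothesis exists (it contains all other equivalence relations with the same two properties). *)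

theory Defs
  imports Main
begin

text \<open>Relations on Q are sets of pairs. The paper's composition S \<circ> R (first R, then S)
  is Isabelle's relcomp R O S. The transition relation is T (q \<rightarrow> q' iff (q,q') \<in> T).\<close>

definition preorder_on :: "'a set \<Rightarrow> ('a \<times> 'a) set \<Rightarrow> bool" where
  "preorder_on Q R \<longleftrightarrow> R \<subseteq> Q \<times> Q \<and> (\<forall>q\<in>Q. (q, q) \<in> R) \<and> trans R"

definition rel_class :: "('a \<times> 'a) set \<Rightarrow> 'a \<Rightarrow> 'a set" where
  "rel_class R q = {q'. (q, q') \<in> R \<and> (q', q) \<in> R}"

definition is_simulation :: "('a \<times> 'a) set \<Rightarrow> ('a \<times> 'a) set \<Rightarrow> bool" where
  "is_simulation T S \<longleftrightarrow> converse T O S \<subseteq> S O converse T"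

definition maximal_trans :: "('a \<times> 'a) set \<Rightarrow> ('a \<times> 'a) set \<Rightarrow> ('a \<times> 'a) set" where
  "maximal_trans T R = {(q, q'). (q, q') \<in> T \<and>
      (\<forall>q''. (q, q'') \<in> T \<and> (q', q'') \<in> R \<longrightarrow> q'' \<in> rel_class R q')}"

end

theory Submission
  imports Defs
begin

lemma max_exists:
  assumes finQ: "finite Q" and TQ: "T \<subseteq> Q \<times> Q" and Rp: "preorder_on Q R" and cb: "(c,b) \<in> T"
  shows "\<exists>b0. (c,b0) \<in> maximal_trans T R \<and> (b,b0) \<in> R"
proof -
  have RQ: "R \<subseteq> Q \<times> Q" and Rr: "\<And>q. q \<in> Q \<Longrightarrow> (q,q) \<in> R" and Rt: "trans R"
    using Rp unfolding preorder_on_def by auto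
  define S where "S = {x. (c,x) \<in> T \<and> (b,x) \<in> R}"
  define m where "m = (\<lambda>x. card {y\<in>S. (x,y) \<in> R})"
  have SQ: "S \<subseteq> Q" using TQ unfolding S_def by auto
  have "b \<in> S" using cb TQ Rr unfolding S_def by auto
  then obtain x where x: "x \<in> S" "\<And>y. y \<in> S \<Longrightarrow> m x \<le> m y"
    using ex_has_least_nat[of "\<lambda>x. x \<in> S" b m] by blast
  have xQ: "x \<in> Q" using x SQ by auto
  have cx: "(c,x) \<in> T" using x unfolding S_def by auto
  have mxq: "(q,x) \<in> R" if q: "(c,q) \<in> T" "(x,q) \<in> R" for q
    proof (rule ccontr)
      assume nq: "(q,x) \<notin> R"
      have bx: "(b,x) \<in> R" using x(1) unfolding S_def by simp
      have qS: "q \<in> S" unfolding S_def using q(1) transD[OF Rt bx q(2)] by simp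
      have s1: "{y\<in>S. (q,y) \<in> R} \<subseteq> {y\<in>S. (x,y) \<in> R}"
        using transD[OF Rt q(2)] by blast
      have s2: "x \<in> {y\<in>S. (x,y) \<in> R}" using x(1) Rr[OF xQ] by simp
      have s3: "x \<notin> {y\<in>S. (q,y) \<in> R}" using nq by simp
      have sub: "{y\<in>S. (q,y) \<in> R} \<subset> {y\<in>S. (x,y) \<in> R}"
        using s1 s2 s3 by blast
      have "finite {y\<in>S. (x,y) \<in> R}" by (rule finite_subset[OF _ finQ]) (use SQ in blast)
      then have "m q < m x" unfolding m_def using psubset_card_mono[OF _ sub] by auto
      with x(2)[OF qS] show False by simp
    qed
  have "(c,x) \<in> maximal_trans T R"
    unfolding maximal_trans_def rel_class_def using cx mxq by auto
  moreover have "(b,x) \<in> R" using x unfolding S_def by auto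
  ultimately show ?thesis by blast
qed

theorem theorem1:
  fixes Q :: "'a set" and T U R P :: "('a \<times> 'a) set"
  assumes finQ: "finite Q"
    and TQ: "T \<subseteq> Q \<times> Q"
    and U_pre: "preorder_on Q U"
    and R_pre: "preorder_on Q R"
    and RU: "R \<subseteq> U"
    and R_stab: "converse T O R \<subseteq> U O converse T"
    and P_equiv: "equiv Q P"
    and PR: "P \<subseteq> R"
    and P_stab: "converse T O P \<subseteq> R O converse T"
    and P_coarsest: "\<And>P'. equiv Q P' \<Longrightarrow> P' \<subseteq> R \<Longrightarrow>
                       converse T O P' \<subseteq> R O converse T \<Longrightarrow> P' \<subseteq> P"
  defines "NotRel \<equiv> U - R"
  defines "NotRel' \<equiv> \<Union>{rel_class P c \<times> rel_class P d | b c d.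
             b \<in> Q \<and> c \<in> Q \<and> d \<in> Q \<and> (c, b) \<in> T \<and> (c, d) \<in> R \<and>
             d \<in> converse T `` (NotRel `` {b}) \<and> d \<notin> converse T `` (R `` {b})}"
  defines "V \<equiv> R - NotRel'"
  defines "X \<equiv> {(c, d). \<exists>b\<in>Q. (c, b) \<in> maximal_trans T R \<and> (c, d) \<in> R \<and>
             d \<in> converse (maximal_trans T R) `` (NotRel `` {b}) \<and>
             d \<notin> converse (maximal_trans T R) `` (R `` {b})}"
  shows "NotRel' = X \<and>
         (\<forall>S. S \<subseteq> R \<and> is_simulation T S \<longrightarrow> S \<subseteq> V) \<and>
         converse T O V \<subseteq> R O converse T \<and>
         preorder_on Q V \<and>
         (V \<subseteq> R \<and> preorder_on Q V \<and> converse T O V \<subseteq> R O converse T) \<and>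
         {rel_class V q | q. q \<in> Q} = {rel_class P q | q. q \<in> Q}"
proof -
  have RQ: "R \<subseteq> Q \<times> Q" and Rr: "\<And>q. q \<in> Q \<Longrightarrow> (q,q) \<in> R" and Rt: "trans R"
    using R_pre unfolding preorder_on_def by auto
  have Ut: "trans U" using U_pre unfolding preorder_on_def by auto
  have PQ: "P \<subseteq> Q \<times> Q" and Pr: "\<And>q. q \<in> Q \<Longrightarrow> (q,q) \<in> P" and Ps: "sym P" and Pt: "trans P"
    using P_equiv unfolding equiv_def refl_on_def by auto
  have Pstab: "\<exists>e. (d,e) \<in> T \<and> (b,e) \<in> R" if "(c,d) \<in> P" "(c,b) \<in> T" for c d b
    using P_stab that by blast
  have Rstab: "\<exists>e. (d,e) \<in> T \<and> (b,e) \<in> U" if "(c,d) \<in> R" "(c,b) \<in> T" for c d b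
    using R_stab that by blast
  have maxT: "(c,b) \<in> maximal_trans T R \<Longrightarrow> (c,b) \<in> T" for c b
    unfolding maximal_trans_def by auto
  have mx: "\<exists>b0. (c,b0) \<in> maximal_trans T R \<and> (b,b0) \<in> R" if "(c,b) \<in> T" for c b
    using max_exists[OF finQ TQ R_pre that] .
  have NR_char: "(c,d) \<in> R \<and> (\<exists>b. (c,b) \<in> T \<and> (\<forall>e. (d,e) \<in> T \<longrightarrow> (b,e) \<notin> R))"
    if "(c,d) \<in> NotRel'" for c d
  proof -
    from that obtain b0 c0 d0 where h: "c \<in> rel_class P c0" "d \<in> rel_class P d0"
      "(c0,b0) \<in> T" "(c0,d0) \<in> R" "d0 \<notin> converse T `` (R `` {b0})"
      unfolding NotRel'_def by blast
    have cc0: "(c0,c) \<in> P" "(c,c0) \<in> P" and dd0: "(d0,d) \<in> P" "(d,d0) \<in> P"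
      using h(1,2) unfolding rel_class_def by auto
    have "(c,d) \<in> R" using cc0 dd0 h(4) PR Rt by (meson subsetD transD)
    moreover obtain b where b: "(c,b) \<in> T" "(b0,b) \<in> R" using Pstab[OF cc0(1) h(3)] by blast
    moreover have "\<forall>e. (d,e) \<in> T \<longrightarrow> (b,e) \<notin> R"
    proof (intro allI impI notI)
      fix e assume e: "(d,e) \<in> T" "(b,e) \<in> R"
      obtain e' where e': "(d0,e') \<in> T" "(e,e') \<in> R" using Pstab[OF dd0(2) e(1)] by blast
      have "(b0,e') \<in> R" using b(2) e(2) e'(2) Rt by (meson transD)
      with e'(1) h(5) show False by blast
    qed
    ultimately show ?thesis by blast
  qed
  have NR_intro: "(c,d) \<in> NotRel'"
    if cd: "(c,d) \<in> R" and cb: "(c,b) \<in> T" and nd: "\<forall>e. (d,e) \<in> T \<longrightarrow> (b,e) \<notin> R" for c d b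
  proof -
    obtain g where g: "(d,g) \<in> T" "(b,g) \<in> U" using Rstab[OF cd cb] by blast
    have "(b,g) \<notin> R" using nd g by blast
    hence d1: "d \<in> converse T `` (NotRel `` {b})" using g unfolding NotRel_def by blast
    have d2: "d \<notin> converse T `` (R `` {b})" using nd by blast
    have Q3: "b \<in> Q" "c \<in> Q" "d \<in> Q" using cb cd TQ RQ by auto
    have "c \<in> rel_class P c" "d \<in> rel_class P d" using Pr Q3 unfolding rel_class_def by auto
    hence "(c,d) \<in> rel_class P c \<times> rel_class P d" by blast
    thus ?thesis unfolding NotRel'_def using Q3 cb cd d1 d2 by blast
  qed
  have V_char: "(c,d) \<in> V \<longleftrightarrow> (c,d) \<in> R \<and> (\<forall>b. (c,b) \<in> T \<longrightarrow> (\<exists>e. (d,e) \<in> T \<and> (b,e) \<in> R))"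
    for c d
  proof
    assume "(c,d) \<in> V"
    hence "(c,d) \<in> R" "(c,d) \<notin> NotRel'" unfolding V_def by auto
    thus "(c,d) \<in> R \<and> (\<forall>b. (c,b) \<in> T \<longrightarrow> (\<exists>e. (d,e) \<in> T \<and> (b,e) \<in> R))"
      using NR_intro by blast
  next
    assume "(c,d) \<in> R \<and> (\<forall>b. (c,b) \<in> T \<longrightarrow> (\<exists>e. (d,e) \<in> T \<and> (b,e) \<in> R))"
    thus "(c,d) \<in> V" unfolding V_def using NR_char by blast
  qed
  have V_I: "(c,d) \<in> V" if "(c,d) \<in> R" "\<And>b. (c,b) \<in> T \<Longrightarrow> \<exists>e. (d,e) \<in> T \<and> (b,e) \<in> R" for c d
    using that V_char[of c d] by blast
  have V_D: "\<exists>e. (d,e) \<in> T \<and> (b,e) \<in> R" if "(c,d) \<in> V" "(c,b) \<in> T" for c d b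
    using that V_char[of c d] by blast
  have p1: "NotRel' = X"
  proof
    show "NotRel' \<subseteq> X"
    proof
      fix p assume "p \<in> NotRel'"
      then obtain c d where p: "p = (c,d)" "(c,d) \<in> NotRel'" by (cases p) auto
      obtain b where cd: "(c,d) \<in> R" and b: "(c,b) \<in> T" "\<forall>e. (d,e) \<in> T \<longrightarrow> (b,e) \<notin> R"
        using NR_char[OF p(2)] by blast
      obtain b0 where b0: "(c,b0) \<in> maximal_trans T R" "(b,b0) \<in> R" using mx[OF b(1)] by blast
      have nd: "\<forall>e. (d,e) \<in> T \<longrightarrow> (b0,e) \<notin> R" using b(2) b0(2) Rt by (meson transD)
      obtain g where g: "(d,g) \<in> T" "(b0,g) \<in> U" using Rstab[OF cd maxT[OF b0(1)]] by blast
      obtain g0 where g0: "(d,g0) \<in> maximal_trans T R" "(g,g0) \<in> R" using mx[OF g(1)] by blast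
      have "(b0,g0) \<in> U" using g(2) g0(2) RU Ut by (meson subsetD transD)
      moreover have "(b0,g0) \<notin> R" using nd maxT[OF g0(1)] by blast
      ultimately have "d \<in> converse (maximal_trans T R) `` (NotRel `` {b0})"
        using g0(1) unfolding NotRel_def by blast
      moreover have "d \<notin> converse (maximal_trans T R) `` (R `` {b0})" using nd maxT by blast
      moreover have "b0 \<in> Q" using maxT[OF b0(1)] TQ by auto
      ultimately show "p \<in> X" unfolding X_def p using b0(1) cd by blast
    qed
  next
    show "X \<subseteq> NotRel'"
    proof
      fix p assume "p \<in> X"
      then obtain c d b where p: "p = (c,d)" and h: "(c, b) \<in> maximal_trans T R" "(c, d) \<in> R"
             "d \<notin> converse (maximal_trans T R) `` (R `` {b})"
        unfolding X_def by blast
      have "\<forall>e. (d,e) \<in> T \<longrightarrow> (b,e) \<notin> R"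
      proof (intro allI impI notI)
        fix e assume e: "(d,e) \<in> T" "(b,e) \<in> R"
        obtain e0 where "(d,e0) \<in> maximal_trans T R" "(e,e0) \<in> R" using mx[OF e(1)] by blast
        moreover have "(b,e0) \<in> R" using e(2) calculation(2) Rt by (meson transD)
        ultimately show False using h(3) by blast
      qed
      thus "p \<in> NotRel'" using NR_intro[OF h(2) maxT[OF h(1)]] p by blast
    qed
  qed
  have p2: "\<forall>S. S \<subseteq> R \<and> is_simulation T S \<longrightarrow> S \<subseteq> V"
  proof (intro allI impI subsetI)
    fix S p assume S: "S \<subseteq> R \<and> is_simulation T S" and pS: "p \<in> S"
    obtain c d where p: "p = (c,d)" by (cases p)
    have "(c,d) \<in> R" using S pS p by auto
    moreover have "\<exists>e. (d,e) \<in> T \<and> (b,e) \<in> R" if "(c,b) \<in> T" for b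
    proof -
      have "(b,d) \<in> converse T O S" using that pS p by blast
      hence "(b,d) \<in> S O converse T" using S unfolding is_simulation_def by blast
      thus ?thesis using S by blast
    qed
    ultimately show "p \<in> V" using V_I p by blast
  qed
  have p3: "converse T O V \<subseteq> R O converse T"
  proof
    fix p assume "p \<in> converse T O V"
    then obtain b c d where p: "p = (b,d)" "(c,b) \<in> T" "(c,d) \<in> V" by blast
    obtain e where "(d,e) \<in> T" "(b,e) \<in> R" using V_D[OF p(3) p(2)] by blast
    thus "p \<in> R O converse T" using p(1) by blast
  qed
  have VR: "V \<subseteq> R" unfolding V_def by auto
  have Vr: "(q,q) \<in> V" if "q \<in> Q" for q
  proof (rule V_I)
    show "(q,q) \<in> R" using Rr that .
    fix b assume "(q,b) \<in> T"
    moreover have "(b,b) \<in> R" using calculation TQ Rr by auto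
    ultimately show "\<exists>e. (q,e) \<in> T \<and> (b,e) \<in> R" by blast
  qed
  have Vt: "trans V"
  proof (rule transI)
    fix x y z assume xy: "(x,y) \<in> V" and yz: "(y,z) \<in> V"
    have "(x,z) \<in> R" using xy yz VR Rt by (meson subsetD transD)
    moreover have "\<exists>e. (z,e) \<in> T \<and> (b,e) \<in> R" if xb: "(x,b) \<in> T" for b
    proof -
      obtain e where e: "(y,e) \<in> T" "(b,e) \<in> R" using V_D[OF xy xb] by blast
      obtain f where f: "(z,f) \<in> T" "(e,f) \<in> R" using V_D[OF yz e(1)] by blast
      show ?thesis using e f Rt by (meson transD)
    qed
    ultimately show "(x,z) \<in> V" by (rule V_I)
  qed
  have p4: "preorder_on Q V" unfolding preorder_on_def using VR RQ Vr Vt by blast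
  have PV: "P \<subseteq> V"
  proof
    fix p assume pP: "p \<in> P"
    obtain c d where p: "p = (c,d)" by (cases p)
    show "p \<in> V" unfolding p
      by (rule V_I, use pP p PR in blast, use pP p Pstab in blast)
  qed
  define E where "E = V \<inter> converse V"
  have Eeq: "equiv Q E" unfolding E_def equiv_def refl_on_def sym_def
    using VR RQ Vr Vt by (auto dest: transD intro!: transI)
  have EP: "E \<subseteq> P"
  proof (rule P_coarsest[OF Eeq])
    show "E \<subseteq> R" using VR E_def by auto
    show "converse T O E \<subseteq> R O converse T" using p3 E_def by blast
  qed
  have PE: "P \<subseteq> E" unfolding E_def using PV Ps by (auto dest: symD)
  have rc: "rel_class V q = rel_class P q" for q
    using EP PE Ps unfolding E_def rel_class_def by (auto dest: symD)
  have p6: "{rel_class V q | q. q \<in> Q} = {rel_class P q | q. q \<in> Q}" using rc by simp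
  show ?thesis using p1 p2 p3 p4 p6 VR by blast
qed

end
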